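(* For every $t=0,1,\dots,T-2$ and every $z_m\in Z_\theta$ with $z_m\le I_t$, one has $H_t(z_m)\ge H_t(I_t)$.
   Context: Model. Fix an integer horizon $T\ge 2$, a discount factor $\alpha\in(0,1]$, and for $t=0,\dots,T-1$: unit ordering costs $c_t\in\mathbb R$, a salvage coefficient $c_T\in\mathbb R$, setup costs $K_t\ge 0$, functions $G_t:\mathbb R\to\mathbb R$, and independent nonnegative random demands $D_0,\dots,D_{T-1}$ with right-continuous distribution functions $F_t$ and finite means; all expectations appearing are assumed finite. Put $C_t(y)=(c_t-\alpha c_{t+1})y+G_t(y)+\alpha c_{t+1}E[D_t]$. Standing assumptions: (i) each $C_t$ is convex with $C_t(y)\to+\infty$ as $|y|\to\infty$; (ii) $K_t\ge \alpha K_{t+1}$ for $t=0,\dots,T-2$. Grid construction. Fix $\theta>0$, let $z_m=m\theta$ ($m\in\mathbb Z$), $Z_\theta=\{z_m:m\in\mathbb Z\}$, and $f_t(n)=F_t(z_{n+1})-F_t(z_n)$ for integers $n\ge -1$. Let $C^m_t=\min\{y: C_t(y)=\min_{x}C_t(x)\}$; with $n_0$ the integer such that $z_{n_0}<C^m_t\le z_{n_0+1}$, let $S^U_t=\min\{z_m\in Z_\theta: z_m\ge C^m_t,\ C_t(z_m)>C_t(z_{n_0})+K_t\}$. Let $s_{T-1}$ be a point with $s_{T-1}\le C^m_{T-1}$ and $C_{T-1}(s_{T-1})=C_{T-1}(C^m_{T-1})+K_{T-1}$, and $\bar I_{T-1}=s_{T-1}$. For $t=T-2,\dots,0$: $I_t=\max\{z_m\in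 Z_\theta: z_m<\min(\bar I_{t+1}-\theta,\,C^m_t)\}$, $\bar I_t=\max\{z_m\in Z_\theta: z_m\le I_t,\ C_t(z_m)>C_t(I_t)+K_t\}+\theta$. Set $H_{T-1}=C_{T-1}$, $S_{T-1}=C^m_{T-1}$. Whenever $H_t,S_t,s_t$ are defined, $V_t(y)=H_t(S_t)+K_t$ for $y<s_t$ and $V_t(y)=H_t(y)$ for $y\ge s_t$. For $t=T-2,\dots,0$: $H_t(y)=C_t(y)+\alpha\sum_{n=-1}^{\infty}V_{t+1}(y-z_n)f_t(n)$; $S_t=\max\{z_m\in Z_\theta: I_t\le z_m\le S^U_t,\ H_t(z_m)=\min\{H_t(z_n): z_n\in Z_\theta,\ I_t\le z_n\le S^U_t\}\}$; $s_t=S_t$ if $K_t=0$, else $s_t=\min\{z_m\in Z_\theta:\bar I_t\le z_m\le S_t,\ H_t(z_m)\le H_t(S_t)+K_t\}$. *)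

theory Defs
  imports "HOL-Probability.Probability"
begin

text \<open>Model data. Demand D_t is represented by its distribution (a probability measure
 on the reals); only its distribution function F_t and its mean E[D_t] enter the
 construction.\<close>

record invmodel =
  hor   :: nat
  alpha :: real
  cost  :: "nat \<Rightarrow> real"             (* c_t, t = 0..T (c_T salvage) *)
  Kst :: "nat \<Rightarrow> real"
  Gf    :: "nat \<Rightarrow> real \<Rightarrow> real"
  dem   :: "nat \<Rightarrow> real measure"
  theta :: real

definition Fd :: "invmodel \<Rightarrow> nat \<Rightarrow> real \<Rightarrow> real" where
  "Fd P t x = measure (dem P t) {..x}"

definition ED :: "invmodel \<Rightarrow> nat \<Rightarrow> real" where
  "ED P t = integral\<^sup>L (dem P t) (\<lambda>x. x)"

definition Cf :: "invmodel \<Rightarrow> nat \<Rightarrow> real \<Rightarrow> real" where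
  "Cf P t y = (cost P t - alpha P * cost P (Suc t)) * y + Gf P t y
              + alpha P * cost P (Suc t) * ED P t"

definition Cm :: "invmodel \<Rightarrow> nat \<Rightarrow> real" where
  "Cm P t = (LEAST y. \<forall>x. Cf P t y \<le> Cf P t x)"

definition zg :: "invmodel \<Rightarrow> int \<Rightarrow> real" where
  "zg P m = real_of_int m * theta P"

definition Zg :: "invmodel \<Rightarrow> real set" where
  "Zg P = range (zg P)"

definition fd :: "invmodel \<Rightarrow> nat \<Rightarrow> int \<Rightarrow> real" where
  "fd P t n = Fd P t (zg P (n + 1)) - Fd P t (zg P n)"

definition n0 :: "invmodel \<Rightarrow> nat \<Rightarrow> int" where
  "n0 P t = (THE n. zg P n < Cm P t \<and> Cm P t \<le> zg P (n + 1))"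

definition SU :: "invmodel \<Rightarrow> nat \<Rightarrow> real" where
  "SU P t = (LEAST x. x \<in> Zg P \<and> x \<ge> Cm P t \<and>
                      Cf P t x > Cf P t (zg P (n0 P t)) + Kst P t)"

definition sLast :: "invmodel \<Rightarrow> real" where
  "sLast P = (SOME s. s \<le> Cm P (hor P - 1) \<and>
        Cf P (hor P - 1) s = Cf P (hor P - 1) (Cm P (hor P - 1)) + Kst P (hor P - 1))"

definition Iof :: "invmodel \<Rightarrow> nat \<Rightarrow> real \<Rightarrow> real" where
  "Iof P t Ibnext = (GREATEST x. x \<in> Zg P \<and> x < min (Ibnext - theta P) (Cm P t))"

definition Ibof :: "invmodel \<Rightarrow> nat \<Rightarrow> real \<Rightarrow> real" where
  "Ibof P t I = (GREATEST x. x \<in> Zg P \<and> x \<le> I \<and> Cf P t x > Cf P t I + Kst P t) + theta P"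

text \<open>Backward recursion, indexed by k = T-1-t.\<close>
primrec Ibrec :: "invmodel \<Rightarrow> nat \<Rightarrow> real" where
  "Ibrec P 0 = sLast P"
| "Ibrec P (Suc k) = Ibof P (hor P - 2 - k) (Iof P (hor P - 2 - k) (Ibrec P k))"

definition Ibar :: "invmodel \<Rightarrow> nat \<Rightarrow> real" where
  "Ibar P t = Ibrec P (hor P - 1 - t)"

definition Ii :: "invmodel \<Rightarrow> nat \<Rightarrow> real" where
  "Ii P t = Iof P t (Ibar P (Suc t))"

definition Vof :: "real \<Rightarrow> (real \<Rightarrow> real) \<Rightarrow> real \<Rightarrow> real \<Rightarrow> real \<Rightarrow> real" where
  "Vof Kt Ht St st y = (if y < st then Ht St + Kt else Ht y)"

text \<open>The expectation sum over n = -1, 0, 1, ... (reindexed by k = n + 1).\<close>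
definition EV :: "invmodel \<Rightarrow> nat \<Rightarrow> (real \<Rightarrow> real) \<Rightarrow> real \<Rightarrow> real" where
  "EV P t V y = (\<Sum>k. V (y - zg P (int k - 1)) * fd P t (int k - 1))"

primrec HSs :: "invmodel \<Rightarrow> nat \<Rightarrow> (real \<Rightarrow> real) \<times> real \<times> real" where
  "HSs P 0 = (Cf P (hor P - 1), Cm P (hor P - 1), sLast P)"
| "HSs P (Suc k) =
     (let t = hor P - 2 - k;
          (H', S', s') = HSs P k;
          V = Vof (Kst P (Suc t)) H' S' s';
          H = (\<lambda>y. Cf P t y + alpha P * EV P t V y);
          I = Ii P t;
          U = SU P t;
          grid = {x \<in> Zg P. I \<le> x \<and> x \<le> U};
          S = (GREATEST x. x \<in> grid \<and> H x = Min (H ` grid));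
          s = (if Kst P t = 0 then S
               else (LEAST x. x \<in> Zg P \<and> Ibar P t \<le> x \<and> x \<le> S \<and> H x \<le> H S + Kst P t))
      in (H, S, s))"

definition Hf :: "invmodel \<Rightarrow> nat \<Rightarrow> real \<Rightarrow> real" where
  "Hf P t = fst (HSs P (hor P - 1 - t))"

definition Sf :: "invmodel \<Rightarrow> nat \<Rightarrow> real" where
  "Sf P t = fst (snd (HSs P (hor P - 1 - t)))"

definition sf :: "invmodel \<Rightarrow> nat \<Rightarrow> real" where
  "sf P t = snd (snd (HSs P (hor P - 1 - t)))"

definition Vf :: "invmodel \<Rightarrow> nat \<Rightarrow> real \<Rightarrow> real" where
  "Vf P t = Vof (Kst P t) (Hf P t) (Sf P t) (sf P t)"

end

theory Submission
  imports Defs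
begin

lemma zg_le_iff: "theta P > 0 \<Longrightarrow> zg P m \<le> zg P n \<longleftrightarrow> m \<le> n"
  by (simp add: zg_def)

lemma zg_less_iff: "theta P > 0 \<Longrightarrow> zg P m < zg P n \<longleftrightarrow> m < n"
  by (simp add: zg_def)

lemma grid_below:
  assumes "theta P > 0" shows "\<exists>x\<in>Zg P. x < b"
proof -
  let ?m = "\<lfloor>b / theta P\<rfloor> - 1"
  have "real_of_int \<lfloor>b / theta P\<rfloor> \<le> b / theta P" by simp
  hence "real_of_int \<lfloor>b / theta P\<rfloor> * theta P \<le> b"
    using assms by (simp add: pos_le_divide_eq[symmetric])
  hence "zg P ?m < b" using assms by (simp add: zg_def algebra_simps)
  thus ?thesis unfolding Zg_def by blast
qed

lemma grid_above:
  assumes "theta P > 0" shows "\<exists>x\<in>Zg P. x > b"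
proof -
  let ?m = "\<lceil>b / theta P\<rceil> + 1"
  have "b / theta P \<le> real_of_int \<lceil>b / theta P\<rceil>" by simp
  hence "b \<le> real_of_int \<lceil>b / theta P\<rceil> * theta P"
    using assms by (simp add: pos_divide_le_eq[symmetric])
  hence "zg P ?m > b" using assms by (simp add: zg_def algebra_simps)
  thus ?thesis unfolding Zg_def by blast
qed

lemma grid_step:
  assumes "theta P > 0" "x \<in> Zg P" "y \<in> Zg P" "x < y" shows "x \<le> y - theta P"
proof -
  obtain m n where "x = zg P m" "y = zg P n" using assms unfolding Zg_def by auto
  with assms have "m < n" by (simp add: zg_less_iff)
  hence "m \<le> n - 1" by simp
  hence "real_of_int m * theta P \<le> real_of_int (n - 1) * theta P"
    using assms by (intro mult_right_mono) auto
  thus ?thesis using \<open>x = _\<close> \<open>y = _\<close> by (simp add: zg_def algebra_simps)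
qed

lemma grid_finite:
  assumes "theta P > 0" shows "finite {x \<in> Zg P. a \<le> x \<and> x \<le> b}"
proof -
  have "{x \<in> Zg P. a \<le> x \<and> x \<le> b} \<subseteq> zg P ` {\<lfloor>a / theta P\<rfloor>..\<lceil>b / theta P\<rceil>}"
  proof
    fix x assume x: "x \<in> {x \<in> Zg P. a \<le> x \<and> x \<le> b}"
    then obtain m where m: "x = zg P m" unfolding Zg_def by auto
    with x have "a \<le> real_of_int m * theta P" "real_of_int m * theta P \<le> b"
      by (auto simp: zg_def)
    hence "a / theta P \<le> real_of_int m" "real_of_int m \<le> b / theta P"
      using assms by (auto simp: pos_divide_le_eq pos_le_divide_eq)
    hence "\<lfloor>a / theta P\<rfloor> \<le> m" "m \<le> \<lceil>b / theta P\<rceil>"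
      by (simp_all add: floor_le_iff le_ceiling_iff)
    thus "x \<in> zg P ` {\<lfloor>a / theta P\<rfloor>..\<lceil>b / theta P\<rceil>}" using m by auto
  qed
  thus ?thesis by (rule finite_subset) simp
qed

lemma finite_greatest:
  fixes Q :: "real \<Rightarrow> bool"
  assumes "finite {x. Q x}" "Q a"
  shows "Q (GREATEST x. Q x) \<and> (\<forall>y. Q y \<longrightarrow> y \<le> (GREATEST x. Q x))"
proof -
  let ?M = "Max {x. Q x}"
  have "Q ?M" using assms Max_in[of "{x. Q x}"] by auto
  moreover have "\<forall>y. Q y \<longrightarrow> y \<le> ?M" using assms by auto
  ultimately have "(GREATEST x. Q x) = ?M" by (intro Greatest_equality) auto
  thus ?thesis using \<open>Q ?M\<close> \<open>\<forall>y. Q y \<longrightarrow> y \<le> ?M\<close> by simp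
qed

lemma finite_least:
  fixes Q :: "real \<Rightarrow> bool"
  assumes "finite {x. Q x}" "Q a"
  shows "Q (LEAST x. Q x) \<and> (\<forall>y. Q y \<longrightarrow> (LEAST x. Q x) \<le> y)"
proof -
  let ?M = "Min {x. Q x}"
  have "Q ?M" using assms Min_in[of "{x. Q x}"] by auto
  moreover have "\<forall>y. Q y \<longrightarrow> ?M \<le> y" using assms by auto
  ultimately have "(LEAST x. Q x) = ?M" by (intro Least_equality) auto
  thus ?thesis using \<open>Q ?M\<close> \<open>\<forall>y. Q y \<longrightarrow> ?M \<le> y\<close> by simp
qed

lemma grid_greatest:
  assumes th: "theta P > 0" and ex: "x0 \<in> Zg P" "Q x0"
    and bd: "\<And>x. x \<in> Zg P \<Longrightarrow> Q x \<Longrightarrow> x \<le> b"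
  shows "(GREATEST x. x \<in> Zg P \<and> Q x) \<in> Zg P \<and> Q (GREATEST x. x \<in> Zg P \<and> Q x)
     \<and> (\<forall>y. y \<in> Zg P \<and> Q y \<longrightarrow> y \<le> (GREATEST x. x \<in> Zg P \<and> Q x))"
proof -
  let ?R = "\<lambda>x. x \<in> Zg P \<and> Q x \<and> x0 \<le> x"
  have "{x. ?R x} \<subseteq> {x \<in> Zg P. x0 \<le> x \<and> x \<le> b}" using bd by auto
  hence fin: "finite {x. ?R x}" using grid_finite[OF th] finite_subset by blast
  from finite_greatest[OF fin, of x0] ex
  obtain g where g: "?R g" "\<forall>y. ?R y \<longrightarrow> y \<le> g" by auto
  have all: "\<forall>y. y \<in> Zg P \<and> Q y \<longrightarrow> y \<le> g"
  proof (intro allI impI)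
    fix y assume "y \<in> Zg P \<and> Q y"
    thus "y \<le> g" using g by (cases "x0 \<le> y") auto
  qed
  have "(GREATEST x. x \<in> Zg P \<and> Q x) = g"
    using g all by (intro Greatest_equality) auto
  thus ?thesis using g all by simp
qed

lemma grid_least:
  assumes th: "theta P > 0" and ex: "x0 \<in> Zg P" "Q x0"
    and bd: "\<And>x. x \<in> Zg P \<Longrightarrow> Q x \<Longrightarrow> b \<le> x"
  shows "(LEAST x. x \<in> Zg P \<and> Q x) \<in> Zg P \<and> Q (LEAST x. x \<in> Zg P \<and> Q x)
     \<and> (\<forall>y. y \<in> Zg P \<and> Q y \<longrightarrow> (LEAST x. x \<in> Zg P \<and> Q x) \<le> y)"
proof -
  let ?R = "\<lambda>x. x \<in> Zg P \<and> Q x \<and> x \<le> x0"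
  have "{x. ?R x} \<subseteq> {x \<in> Zg P. b \<le> x \<and> x \<le> x0}" using bd by auto
  hence fin: "finite {x. ?R x}" using grid_finite[OF th] finite_subset by blast
  from finite_least[OF fin, of x0] ex
  obtain g where g: "?R g" "\<forall>y. ?R y \<longrightarrow> g \<le> y" by auto
  have all: "\<forall>y. y \<in> Zg P \<and> Q y \<longrightarrow> g \<le> y"
  proof (intro allI impI)
    fix y assume "y \<in> Zg P \<and> Q y"
    thus "g \<le> y" using g by (cases "y \<le> x0") auto
  qed
  have "(LEAST x. x \<in> Zg P \<and> Q x) = g"
    using g all by (intro Least_equality) auto
  thus ?thesis using g all by simp
qed

lemma coercive:
  fixes f :: "real \<Rightarrow> real"
  assumes "filterlim f at_top at_infinity"
  shows "\<exists>R. \<forall>x. R \<le> \<bar>x\<bar> \<longrightarrow> B \<le> f x"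
  using assms unfolding filterlim_at_top eventually_at_infinity by (auto simp: real_norm_def)

lemma convex_mono_left:
  fixes f :: "real \<Rightarrow> real"
  assumes cv: "convex_on UNIV f" and mn: "\<forall>x. f c \<le> f x" and "z \<le> y" "y \<le> c"
  shows "f y \<le> f z"
proof (cases "z = y")
  case True thus ?thesis by simp
next
  case False
  hence zy: "z < y" using assms by simp
  define t where "t = (y - z) / (c - z)"
  have cz: "c - z > 0" using zy assms by simp
  have t01: "0 \<le> t" "t \<le> 1" using zy assms cz by (auto simp: t_def divide_simps)
  have "t * (c - z) = y - z" using cz by (simp add: t_def)
  hence "t * c - t * z = y - z" by (simp add: right_diff_distrib)
  hence ty: "(1 - t) *\<^sub>R z + t *\<^sub>R c = y"
    by (simp add: algebra_simps)
  have "f y \<le> (1 - t) * f z + t * f c"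
    using convex_onD[OF cv t01] ty by (metis UNIV_I)
  also have "\<dots> \<le> (1 - t) * f z + t * f z"
    using mn t01 by (intro add_left_mono mult_left_mono) auto
  finally show ?thesis by (simp add: algebra_simps)
qed


lemma Cm_min:
  assumes cv: "convex_on UNIV (Cf P t)" and co: "filterlim (Cf P t) at_top at_infinity"
  shows "\<forall>x. Cf P t (Cm P t) \<le> Cf P t x"
proof -
  let ?C = "Cf P t"
  have cont: "continuous_on UNIV ?C" using convex_on_continuous[OF open_UNIV cv] .
  obtain R where R: "\<forall>x. R \<le> \<bar>x\<bar> \<longrightarrow> ?C 0 + 1 \<le> ?C x" using coercive[OF co] by blast
  let ?L = "{x. ?C x \<le> ?C 0}"
  have Lb: "?L \<subseteq> cball 0 \<bar>R\<bar>"
  proof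
    fix x assume "x \<in> ?L"
    hence "\<not> R \<le> \<bar>x\<bar>" using R by force
    thus "x \<in> cball 0 \<bar>R\<bar>" by (simp add: dist_real_def)
  qed
  have "closed ?L" using cont by (intro closed_Collect_le) (auto intro: continuous_intros)
  hence cL: "compact ?L" using Lb bounded_cball bounded_subset compact_eq_bounded_closed by metis
  obtain m where m: "m \<in> ?L" "\<forall>y\<in>?L. ?C m \<le> ?C y"
    using continuous_attains_inf[OF cL, of ?C] continuous_on_subset[OF cont] by force
  have gm: "\<forall>y. ?C m \<le> ?C y" using m by (metis mem_Collect_eq linear order_trans)
  let ?M = "{x. ?C x \<le> ?C m}"
  have "closed ?M" using cont by (intro closed_Collect_le) (auto intro: continuous_intros)
  moreover have "?M \<subseteq> ?L" using m by auto
  ultimately have cM: "compact ?M" using Lb bounded_cball bounded_subset compact_eq_bounded_closed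
    by (metis (no_types, lifting) order_trans)
  obtain x0 where x0: "x0 \<in> ?M" "\<forall>y\<in>?M. x0 \<le> y"
    using continuous_attains_inf[OF cM, of "\<lambda>x. x"] m(1) by (force intro: continuous_intros)
  have P0: "\<forall>x. ?C x0 \<le> ?C x" using x0 gm by (metis mem_Collect_eq order_trans)
  show ?thesis unfolding Cm_def
  proof (rule LeastI2_order[of _ x0])
    show "\<forall>x. ?C x0 \<le> ?C x" by (rule P0)
    show "\<And>y. \<forall>x. ?C y \<le> ?C x \<Longrightarrow> x0 \<le> y" using x0 by auto
  qed auto
qed

lemma Ibar_step:
  assumes "u + 2 \<le> hor P" shows "Ibar P u = Ibof P u (Ii P u)"
proof -
  have e: "hor P - 1 - u = Suc (hor P - 2 - u)" "hor P - 2 - (hor P - 2 - u) = u"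
    "hor P - 1 - Suc u = hor P - 2 - u" using assms by auto
  show ?thesis unfolding Ibar_def Ii_def e(1) Ibrec.simps e(2) by (simp add: Ibar_def e(3))
qed

lemma HSs_step:
  assumes "t + 2 \<le> hor P"
  shows "HSs P (hor P - 1 - t) =
   (let H = (\<lambda>y. Cf P t y + alpha P * EV P t (Vf P (Suc t)) y);
        G = {x \<in> Zg P. Ii P t \<le> x \<and> x \<le> SU P t};
        S = (GREATEST x. x \<in> G \<and> H x = Min (H ` G))
    in (H, S, if Kst P t = 0 then S
              else (LEAST x. x \<in> Zg P \<and> Ibar P t \<le> x \<and> x \<le> S \<and> H x \<le> H S + Kst P t)))"
proof -
  define k where "k = hor P - 2 - t"
  have e: "hor P - 1 - t = Suc k" "hor P - 2 - k = t" "hor P - 1 - Suc t = k"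
    using assms by (auto simp: k_def)
  obtain H' S' s' where eq: "HSs P k = (H', S', s')" by (cases "HSs P k") auto
  have V: "Vf P (Suc t) = Vof (Kst P (Suc t)) H' S' s'"
    unfolding Vf_def Hf_def Sf_def sf_def e(3) eq by simp
  show ?thesis unfolding e(1) HSs.simps e(2) by (simp add: eq V Let_def)
qed

lemma Hf_eq:
  assumes "t + 2 \<le> hor P"
  shows "Hf P t = (\<lambda>y. Cf P t y + alpha P * EV P t (Vf P (Suc t)) y)"
  using HSs_step[OF assms] by (simp add: Hf_def Let_def)


lemma Ii_props:
  assumes th: "theta P > 0"
  shows "Ii P t \<in> Zg P \<and> Ii P t < Ibar P (Suc t) - theta P \<and> Ii P t < Cm P t"
proof -
  let ?b = "min (Ibar P (Suc t) - theta P) (Cm P t)"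
  obtain x0 where "x0 \<in> Zg P" "x0 < ?b" using grid_below[OF th] by blast
  with grid_greatest[where Q = "\<lambda>x. x < ?b" and b = ?b, OF th]
  show ?thesis unfolding Ii_def Iof_def by auto
qed

lemma Ibar_le:
  assumes u: "u + 2 \<le> hor P" and th: "theta P > 0" and K: "Kst P u \<ge> 0"
    and co: "filterlim (Cf P u) at_top at_infinity"
  shows "Ibar P u \<le> Ii P u"
proof -
  let ?I = "Ii P u" and ?C = "Cf P u"
  have IZ: "?I \<in> Zg P" using Ii_props[OF th] by blast
  obtain R where R: "\<forall>x. R \<le> \<bar>x\<bar> \<longrightarrow> ?C ?I + Kst P u + 1 \<le> ?C x"
    using coercive[OF co] by blast
  obtain x0 where x0: "x0 \<in> Zg P" "x0 < min ?I (- \<bar>R\<bar>)" using grid_below[OF th] by blast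
  have "x0 < - \<bar>R\<bar>" using x0 by simp
  hence "R \<le> \<bar>x0\<bar>" by linarith
  hence "?C x0 > ?C ?I + Kst P u" using R by force
  with x0 have q: "x0 \<le> ?I \<and> ?C x0 > ?C ?I + Kst P u" by simp
  let ?g = "GREATEST x. x \<in> Zg P \<and> (x \<le> ?I \<and> ?C x > ?C ?I + Kst P u)"
  from grid_greatest[where Q = "\<lambda>x. x \<le> ?I \<and> ?C x > ?C ?I + Kst P u" and b = ?I, OF th x0(1)] q
  have g: "?g \<in> Zg P" "?g \<le> ?I" "?C ?g > ?C ?I + Kst P u" by auto
  have "?g \<noteq> ?I" using g(3) K by auto
  hence "?g < ?I" using g by simp
  hence "?g \<le> ?I - theta P" using grid_step[OF th g(1) IZ] by simp
  thus ?thesis unfolding Ibar_step[OF u] Ibof_def by simp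
qed

lemma SU_props:
  assumes th: "theta P > 0" and co: "filterlim (Cf P t) at_top at_infinity"
  shows "SU P t \<in> Zg P \<and> Cm P t \<le> SU P t"
proof -
  let ?C = "Cf P t" and ?c = "Cf P t (zg P (n0 P t)) + Kst P t"
  obtain R where R: "\<forall>x. R \<le> \<bar>x\<bar> \<longrightarrow> ?c + 1 \<le> ?C x"
    using coercive[OF co] by blast
  obtain x0 where x0: "x0 \<in> Zg P" "x0 > max (Cm P t) \<bar>R\<bar>" using grid_above[OF th] by blast
  have "x0 > \<bar>R\<bar>" using x0 by simp
  hence "R \<le> \<bar>x0\<bar>" by linarith
  hence "?C x0 > ?c" using R by force
  with x0 have q: "x0 \<ge> Cm P t \<and> ?C x0 > ?c" by simp
  from grid_least[where Q = "\<lambda>x. x \<ge> Cm P t \<and> ?C x > ?c" and b = "Cm P t", OF th x0(1)] q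
  show ?thesis unfolding SU_def by auto
qed

lemma s_ge:
  assumes u: "u + 2 \<le> hor P" and th: "theta P > 0" and K: "Kst P u \<ge> 0"
    and co: "filterlim (Cf P u) at_top at_infinity"
  shows "Ibar P u \<le> sf P u"
proof -
  define H where "H = (\<lambda>y. Cf P u y + alpha P * EV P u (Vf P (Suc u)) y)"
  define G where "G = {x \<in> Zg P. Ii P u \<le> x \<and> x \<le> SU P u}"
  define S where "S = (GREATEST x. x \<in> G \<and> H x = Min (H ` G))"
  have sf: "sf P u = (if Kst P u = 0 then S
              else (LEAST x. x \<in> Zg P \<and> Ibar P u \<le> x \<and> x \<le> S \<and> H x \<le> H S + Kst P u))"
    unfolding sf_def HSs_step[OF u] Let_def H_def G_def S_def by simp
  have IZ: "Ii P u \<in> Zg P" "Ii P u < Cm P u" using Ii_props[OF th] by auto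
  have "Cm P u \<le> SU P u" using SU_props[OF th co] by auto
  hence IG: "Ii P u \<in> G" using IZ by (simp add: G_def)
  have fG: "finite G" unfolding G_def using grid_finite[OF th] .
  have "G \<noteq> {}" using IG by auto
  hence "Min (H ` G) \<in> H ` G" using fG by simp
  then obtain a where a: "a \<in> G" "H a = Min (H ` G)" by auto
  have "finite {x. x \<in> G \<and> H x = Min (H ` G)}" using fG by simp
  from finite_greatest[OF this, of a] a
  have SG: "S \<in> G" unfolding S_def by auto
  have Ib: "Ibar P u \<le> Ii P u" using Ibar_le[OF u th K co] .
  have IS: "Ii P u \<le> S" using SG by (simp add: G_def)
  show ?thesis
  proof (cases "Kst P u = 0")
    case True thus ?thesis using sf Ib IS by simp
  next
    case False
    let ?Q = "\<lambda>x. x \<in> Zg P \<and> Ibar P u \<le> x \<and> x \<le> S \<and> H x \<le> H S + Kst P u"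
    have "{x. ?Q x} \<subseteq> {x \<in> Zg P. Ibar P u \<le> x \<and> x \<le> S}" by auto
    hence fin: "finite {x. ?Q x}" using grid_finite[OF th] finite_subset by blast
    have "?Q S" using SG Ib IS K by (simp add: G_def)
    from finite_least[OF fin this] show ?thesis using sf False by simp
  qed
qed


lemma s_last:
  assumes "u + 1 = hor P" shows "Ibar P u = sf P u"
proof -
  have "hor P - 1 - u = 0" using assms by simp
  thus ?thesis unfolding Ibar_def sf_def by simp
qed

theorem lemma3p1:
  fixes P :: invmodel
  assumes T2: "hor P \<ge> 2"
    and alpha: "0 < alpha P" "alpha P \<le> 1"
    and theta: "theta P > 0"
    and Kpos: "\<And>t. t < hor P \<Longrightarrow> Kst P t \<ge> 0"
    and Kdec: "\<And>t. t + 2 \<le> hor P \<Longrightarrow> Kst P t \<ge> alpha P * Kst P (Suc t)"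
    and dprob: "\<And>t. t < hor P \<Longrightarrow> prob_space (dem P t)"
    and dborel: "\<And>t. t < hor P \<Longrightarrow> sets (dem P t) = sets borel"
    and dnonneg: "\<And>t. t < hor P \<Longrightarrow> AE x in dem P t. x \<ge> 0"
    and dmean: "\<And>t. t < hor P \<Longrightarrow> integrable (dem P t) (\<lambda>x. x)"
    and Cconv: "\<And>t. t < hor P \<Longrightarrow> convex_on UNIV (Cf P t)"
    and Ccoer: "\<And>t. t < hor P \<Longrightarrow> filterlim (Cf P t) at_top at_infinity"
    and finexp: "\<And>t y. t + 2 \<le> hor P \<Longrightarrow>
        summable (\<lambda>k. \<bar>Vf P (Suc t) (y - zg P (int k - 1)) * fd P t (int k - 1)\<bar>)"
  shows "\<forall>t. t + 2 \<le> hor P \<longrightarrow>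
           (\<forall>m. zg P m \<le> Ii P t \<longrightarrow> Hf P t (zg P m) \<ge> Hf P t (Ii P t))"
proof (intro allI impI)
  fix t m assume t2: "t + 2 \<le> hor P" and zm: "zg P m \<le> Ii P t"
  have sge: "Ibar P (Suc t) \<le> sf P (Suc t)"
  proof (cases "Suc t + 2 \<le> hor P")
    case True
    thus ?thesis using s_ge[OF True theta] Kpos[of "Suc t"] Ccoer[of "Suc t"] by simp
  next
    case False
    hence "Suc t + 1 = hor P" using t2 by simp
    thus ?thesis using s_last by simp
  qed
  have Ip: "Ii P t < Ibar P (Suc t) - theta P" "Ii P t < Cm P t"
    using Ii_props[OF theta] by auto
  define c where "c = Hf P (Suc t) (Sf P (Suc t)) + Kst P (Suc t)"
  have EVc: "EV P t (Vf P (Suc t)) y = (\<Sum>k. c * fd P t (int k - 1))" if y: "y \<le> Ii P t" for y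
  proof -
    have "Vf P (Suc t) (y - zg P (int k - 1)) = c" for k :: nat
    proof -
      have "real k * theta P \<ge> 0" using theta by simp
      hence "zg P (int k - 1) \<ge> - theta P" by (simp add: zg_def algebra_simps)
      hence "y - zg P (int k - 1) < sf P (Suc t)" using y Ip sge by linarith
      thus ?thesis by (simp add: Vf_def Vof_def c_def)
    qed
    thus ?thesis unfolding EV_def by simp
  qed
  have Cm: "\<forall>x. Cf P t (Cm P t) \<le> Cf P t x"
    using Cm_min[OF Cconv Ccoer] t2 by simp
  have "Cf P t (Ii P t) \<le> Cf P t (zg P m)"
    using convex_mono_left[OF Cconv Cm zm] Ip t2 by simp
  thus "Hf P t (zg P m) \<ge> Hf P t (Ii P t)"
    unfolding Hf_eq[OF t2] using EVc[OF zm] EVc[of "Ii P t"] by simp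
qed

end
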